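(* Let $H$ be a real Hilbert space and let $T:H\to H$ be a nonexpansive operator with $Fix(T)=\{x\in H:Tx=x\}\neq\varnothing$. Let $z^{0},z^{-1}\in H$, let $\{e^k\}_{k\ge0}$ be a sequence in $H$, let $\{\alpha_k\}_{k\ge0},\{\lambda_k\}_{k\ge0}$ be nondecreasing real sequences, and define for $k\ge0$ $$\mu^{k}=z^{k}+\alpha_{k}(z^{k}-z^{k-1}),\qquad z^{k+1}=\mu^{k}+\lambda_{k}(T\mu^{k}+e^{k}-\mu^{k}).$$ Assume: (a) there is $\alpha\in[0,1)$ with $0\le\alpha_k\le\alpha$ for all $k$, and $\alpha_0=0$; (b) there are $\lambda,\sigma,\delta>0$ such that $$\delta>\frac{\alpha[\alpha(1+\alpha)+\sigma]}{1-\alpha^2}\quad\text{and}\quad 0<\lambda\le\lambda_k\le\frac{\delta-\alpha[\alpha(1+\alpha)+\alpha\delta+\sigma]}{\delta[1+\alpha(1+\alpha)+\alpha\delta+\sigma]}\ \text{ for all }k;$$ (c) the sequence $\{z^k\}$ is bounded; (d) $\sum_{k=0}^{+\infty}\|e^k\|<+\infty$. Then: (i) $\sum_{k=0}^{\infty}\|z^{k+1}-z^k\|^2<+\infty$, and in particular $\lim_{k\to+\infty}\|z^{k+1}-z^k\|=0$; (ii) for every $z^*\in Fix(T)$, $\lim_{k\to+\infty}\|z^k-z^*\|$ exists; (iii) $\lim_{k\to+\infty}\|T\mu^k-\mu^k\|=0$ and $\{z^k\}$ converges weakly to a fixed point of $T$. *)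

theory Defs
  imports "HOL-Analysis.Analysis"
begin

text \<open>A real Hilbert space is modelled by a type of class real_inner and complete_space.\<close>

definition nonexpansive :: "('a::real_normed_vector \<Rightarrow> 'a) \<Rightarrow> bool" where
  "nonexpansive T \<longleftrightarrow> (\<forall>x y. norm (T x - T y) \<le> norm (x - y))"

definition Fix :: "('a \<Rightarrow> 'a) \<Rightarrow> 'a set" where
  "Fix T = {x. T x = x}"

definition weakly_converges_to :: "(nat \<Rightarrow> 'a::real_inner) \<Rightarrow> 'a \<Rightarrow> bool" where
  "weakly_converges_to x p \<longleftrightarrow> (\<forall>y. (\<lambda>k. inner (x k) y) \<longlonglongrightarrow> inner p y)"

end

theory Submission
  imports Defs
begin

definition lsup :: "(nat \<Rightarrow> real) \<Rightarrow> real" where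
  "lsup f = Inf {b. eventually (\<lambda>j. f j \<le> b) sequentially}"

lemma lsup_least:
  assumes "\<And>j. a \<le> f j" "eventually (\<lambda>j. f j \<le> b) sequentially"
  shows "lsup f \<le> b"
proof -
  have "bdd_below {b. eventually (\<lambda>j. f j \<le> b) sequentially}"
  proof (rule bdd_belowI)
    fix x assume "x \<in> {b. eventually (\<lambda>j. f j \<le> b) sequentially}"
    then obtain N where "\<forall>n\<ge>N. f n \<le> x" by (auto simp: eventually_sequentially)
    then show "a \<le> x" using assms(1)[of N] by auto
  qed
  then show ?thesis unfolding lsup_def using assms(2) by (intro cInf_lower) auto
qed

lemma lsup_upper:
  assumes "\<And>j. f j \<le> B" "e > 0"
  shows "eventually (\<lambda>j. f j < lsup f + e) sequentially"
proof -
  have ne: "{b. eventually (\<lambda>j. f j \<le> b) sequentially} \<noteq> {}"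
    using assms(1) by (auto intro!: exI[of _ B])
  have "lsup f < lsup f + e" using assms by simp
  then obtain b where "b \<in> {b. eventually (\<lambda>j. f j \<le> b) sequentially}" "b < lsup f + e"
    using cInf_lessD[OF ne] unfolding lsup_def by blast
  then show ?thesis by (auto elim: eventually_mono)
qed

lemma lsup_lower:
  assumes "\<And>j. a \<le> f j" "\<And>j. f j \<le> B"
  shows "a \<le> lsup f"
proof (rule field_le_epsilon)
  fix e :: real assume "e > 0"
  have "eventually (\<lambda>j. f j < lsup f + e) sequentially" using lsup_upper[OF assms(2) \<open>e>0\<close>] .
  then obtain N where "\<forall>n\<ge>N. f n < lsup f + e"
    by (auto simp: eventually_sequentially)
  then show "a \<le> lsup f + e" using assms(1)[of N] by force
qed

lemma lsup_comb:
  fixes f hA hB v :: "nat \<Rightarrow> real"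
  assumes f: "\<And>j. aL \<le> f j"
    and hA: "\<And>j. hA j \<le> BA" and hB: "\<And>j. hB j \<le> BB"
    and ab: "a \<ge> 0" "b \<ge> 0" and v: "v \<longlonglongrightarrow> 0"
    and le: "\<And>j. f j \<le> a * hA j + b * hB j + C + v j"
  shows "lsup f \<le> a * lsup hA + b * lsup hB + C"
proof (rule field_le_epsilon)
  fix e :: real assume e: "e > 0"
  define e' where "e' = e / (a + b + 1)"
  have e': "e' > 0" using e ab by (simp add: e'_def)
  have ee: "(a + b + 1) * e' = e" using ab by (simp add: e'_def)
  have ev1: "eventually (\<lambda>j. hA j < lsup hA + e') sequentially" by (rule lsup_upper[OF hA e'])
  have ev2: "eventually (\<lambda>j. hB j < lsup hB + e') sequentially" by (rule lsup_upper[OF hB e'])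
  have ev3: "eventually (\<lambda>j. v j < e') sequentially"
    using v e' unfolding lim_sequentially dist_real_def eventually_sequentially
    by (metis abs_less_iff diff_zero)
  have "eventually (\<lambda>j. f j \<le> a * lsup hA + b * lsup hB + C + e) sequentially"
  proof (rule eventually_mono[OF eventually_conj[OF ev1 eventually_conj[OF ev2 ev3]]])
    fix j assume H: "hA j < lsup hA + e' \<and> hB j < lsup hB + e' \<and> v j < e'"
    have "a * hA j \<le> a * (lsup hA + e')" using H ab by (intro mult_left_mono) auto
    moreover have "b * hB j \<le> b * (lsup hB + e')" using H ab by (intro mult_left_mono) auto
    ultimately have "f j \<le> a * lsup hA + b * lsup hB + C + (a + b + 1) * e'"
      using le[of j] H by (simp add: algebra_simps)
    then show "f j \<le> a * lsup hA + b * lsup hB + C + e" using ee by simp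
  qed
  then show "lsup f \<le> a * lsup hA + b * lsup hB + C + e"
    by (rule lsup_least[OF f])
qed

lemma lsup_lim:
  fixes f :: "nat \<Rightarrow> real"
  assumes "f \<longlonglongrightarrow> L"
  shows "lsup f = L"
proof -
  have bs: "bounded (range f)" using assms convergent_imp_bounded by blast
  then obtain K where K: "\<And>j. \<bar>f j\<bar> \<le> K" by (auto simp: bounded_iff)
  have lo: "\<And>j. - K \<le> f j" and hi: "\<And>j. f j \<le> K" using K by (auto simp: abs_le_iff, smt (verit) K abs_le_iff)
  have "lsup f \<le> L"
  proof (rule field_le_epsilon)
    fix e :: real assume "e > 0"
    then have "eventually (\<lambda>j. f j \<le> L + e) sequentially"
      using assms unfolding lim_sequentially dist_real_def eventually_sequentially
      by (metis abs_less_iff add.commute diff_less_eq less_imp_le)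
    then show "lsup f \<le> L + e" by (rule lsup_least[OF lo])
  qed
  moreover have "L \<le> lsup f"
  proof (rule field_le_epsilon)
    fix e :: real assume e: "e > 0"
    have "eventually (\<lambda>j. f j < lsup f + e) sequentially" by (rule lsup_upper[OF hi e])
    then show "L \<le> lsup f + e"
      by (intro tendsto_upperbound[OF assms]) (auto elim: eventually_mono)
  qed
  ultimately show ?thesis by simp
qed

lemma sq_pert:
  fixes a b :: "'a::real_normed_vector"
  assumes "norm a \<le> norm b + r" "0 \<le> r"
  shows "(norm a)\<^sup>2 \<le> (norm b)\<^sup>2 + r * (2 * norm b + r)"
proof -
  have "(norm a)\<^sup>2 \<le> (norm b + r)\<^sup>2" using assms by (intro power_mono) auto
  then show ?thesis by (simp add: power2_eq_square algebra_simps)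
qed

lemma mid_id:
  fixes s x y :: "'a::real_inner"
  shows "(norm (s - (1/2) *\<^sub>R (x + y)))\<^sup>2 = (norm (s-x))\<^sup>2/2 + (norm (s-y))\<^sup>2/2 - (norm (x-y))\<^sup>2/4"
  by (simp add: power2_norm_eq_inner inner_diff_left inner_diff_right inner_add_left inner_add_right
      inner_commute algebra_simps) (simp add: field_simps)

definition G :: "(nat \<Rightarrow> 'a::real_normed_vector) \<Rightarrow> 'a \<Rightarrow> real" where
  "G s x = lsup (\<lambda>j. (norm (s j - x))\<^sup>2)"

lemma G_bound:
  assumes "\<And>j. norm (s j) \<le> Bs"
  shows "(norm (s j - x))\<^sup>2 \<le> (Bs + norm x)\<^sup>2"
proof -
  have "norm (s j - x) \<le> Bs + norm x" using assms[of j] norm_triangle_ineq4[of "s j" x] by linarith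
  then show ?thesis by (intro power_mono) auto
qed

lemma G_nonneg:
  assumes "\<And>j. norm (s j) \<le> Bs"
  shows "0 \<le> G s x"
  unfolding G_def by (rule lsup_lower[OF _ G_bound[OF assms]]) auto

lemma G_mono_gen:
  fixes s :: "nat \<Rightarrow> 'a::real_normed_vector"
  assumes "\<And>j. norm (s j) \<le> Bs" "v \<longlonglongrightarrow> 0"
    and "\<And>j. (norm (s j - x))\<^sup>2 \<le> (norm (s j - y))\<^sup>2 + C + v j"
  shows "G s x \<le> G s y + C"
proof -
  have "G s x \<le> 1 * G s y + 0 * G s y + C"
    unfolding G_def
    by (rule lsup_comb[where aL=0 and hA="\<lambda>j. (norm (s j - y))\<^sup>2" and hB="\<lambda>j. (norm (s j - y))\<^sup>2"
          and BA="(Bs + norm y)\<^sup>2" and BB="(Bs + norm y)\<^sup>2"])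
       (use assms(3) G_bound[of s Bs, OF assms(1)] assms(2) in auto)
  then show ?thesis by simp
qed

lemma G_mid:
  fixes s :: "nat \<Rightarrow> 'a::real_inner"
  assumes "\<And>j. norm (s j) \<le> Bs"
  shows "G s ((1/2) *\<^sub>R (x + y)) \<le> G s x / 2 + G s y / 2 - (norm (x-y))\<^sup>2/4"
proof -
  have eq: "(norm (s j - (1/2) *\<^sub>R (x + y)))\<^sup>2 \<le> (1/2) * (norm (s j - x))\<^sup>2
     + (1/2) * (norm (s j - y))\<^sup>2 + (- (norm (x-y))\<^sup>2/4) + 0" for j
    using mid_id[of "s j" x y] by simp
  have "G s ((1/2) *\<^sub>R (x + y)) \<le> (1/2) * G s x + (1/2) * G s y + (- (norm (x-y))\<^sup>2/4)"
    unfolding G_def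
    apply (rule lsup_comb[where aL=0 and v="\<lambda>_. 0" and hA="\<lambda>j. (norm (s j - x))\<^sup>2" and hB="\<lambda>j. (norm (s j - y))\<^sup>2"
          and BA="(Bs + norm x)\<^sup>2" and BB="(Bs + norm y)\<^sup>2"])
    apply simp
    apply (rule G_bound[of s Bs, OF assms(1)])
    apply (rule G_bound[of s Bs, OF assms(1)])
    apply simp
    apply simp
    apply simp
    apply (rule eq)
    done
  then show ?thesis by simp
qed

lemma G_cont:
  fixes s :: "nat \<Rightarrow> 'a::real_normed_vector"
  assumes "\<And>j. norm (s j) \<le> Bs"
  shows "G s c \<le> G s x + norm (c - x) * (2 * (Bs + norm c + norm (c - x)) + norm (c - x))"
proof (rule G_mono_gen[OF assms tendsto_const])
  fix j
  let ?d = "norm (c - x)"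
  have 1: "norm (s j - c) \<le> norm (s j - x) + ?d"
    using norm_triangle_ineq[of "s j - x" "x - c"] by (simp add: norm_minus_commute)
  have 2: "norm (s j - x) \<le> Bs + norm c + ?d"
    using norm_triangle_ineq[of "s j - c" "c - x"] norm_triangle_ineq4[of "s j" c] assms[of j] by simp
  have "(norm (s j - c))\<^sup>2 \<le> (norm (s j - x))\<^sup>2 + ?d * (2 * norm (s j - x) + ?d)"
    by (rule sq_pert[OF 1]) simp
  also have "\<dots> \<le> (norm (s j - x))\<^sup>2 + ?d * (2 * (Bs + norm c + ?d) + ?d)"
    using 2 by (intro add_left_mono mult_left_mono) auto
  finally show "(norm (s j - c))\<^sup>2 \<le> (norm (s j - x))\<^sup>2 + ?d * (2 * (Bs + norm c + ?d) + ?d) + 0"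
    by simp
qed

lemma center_exists:
  fixes s :: "nat \<Rightarrow> 'a::{real_inner, complete_space}"
  assumes Bs: "\<And>j. norm (s j) \<le> Bs"
  shows "\<exists>c. \<forall>x. G s c \<le> G s x"
proof -
  define m where "m = Inf (range (G s))"
  have bb: "bdd_below (range (G s))" using G_nonneg[of s Bs, OF Bs] unfolding bdd_below_def by auto
  have mle: "\<And>x. m \<le> G s x" unfolding m_def using bb by (auto intro: cInf_lower)
  have "\<forall>n. \<exists>x. G s x < m + 1 / (real n + 1)"
  proof
    fix n
    have "m < m + 1 / (real n + 1)" by simp
    then show "\<exists>x. G s x < m + 1 / (real n + 1)"
      using cInf_lessD[of "range (G s)"] unfolding m_def by auto
  qed
  then obtain xs where xs: "\<And>n. G s (xs n) < m + 1 / (real n + 1)" by metis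
  have dist_bound: "(norm (xs n - xs k))\<^sup>2 \<le> 2 / (real n + 1) + 2 / (real k + 1)" for n k
  proof -
    have "m \<le> G s ((1/2) *\<^sub>R (xs n + xs k))" by (rule mle)
    also have "\<dots> \<le> G s (xs n) / 2 + G s (xs k) / 2 - (norm (xs n - xs k))\<^sup>2/4" by (rule G_mid[of s Bs, OF Bs])
    finally show ?thesis using xs[of n] xs[of k] by linarith
  qed
  have "Cauchy xs"
  proof (rule metric_CauchyI)
    fix e :: real assume e: "e > 0"
    obtain M :: nat where M: "4 / e\<^sup>2 < real M" using reals_Archimedean2 by blast
    have Mpos: "0 < real M" using M e by (smt (verit) divide_pos_pos zero_less_power)
    show "\<exists>M. \<forall>m\<ge>M. \<forall>n\<ge>M. dist (xs m) (xs n) < e"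
    proof (intro exI allI impI)
      fix n k assume nk: "M \<le> n" "M \<le> k"
      have "2 / (real n + 1) \<le> 2 / (real M + 1)" using nk by (intro divide_left_mono) auto
      moreover have "2 / (real k + 1) \<le> 2 / (real M + 1)" using nk by (intro divide_left_mono) auto
      moreover have "4 / (real M + 1) < e\<^sup>2"
      proof -
        have "4 / e\<^sup>2 < real M + 1" using M by simp
        then show ?thesis using e by (simp add: field_simps)
      qed
      ultimately have "(norm (xs n - xs k))\<^sup>2 < e\<^sup>2" using dist_bound[of n k] by simp
      then have "norm (xs n - xs k) < e" using e by (simp add: power_less_imp_less_base)
      then show "dist (xs n) (xs k) < e" by (simp add: dist_norm)
    qed
  qed
  then obtain c where c: "xs \<longlonglongrightarrow> c" using Cauchy_convergent_iff convergent_def by blast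
  define d where "d n = norm (c - xs n)" for n
  have d0: "d \<longlonglongrightarrow> 0"
  proof -
    have "(\<lambda>n. c - xs n) \<longlonglongrightarrow> c - c" by (intro tendsto_intros c)
    then show ?thesis unfolding d_def using tendsto_norm_zero by fastforce
  qed
  have inv0: "(\<lambda>n. 1 / (real n + 1)) \<longlonglongrightarrow> 0"
    using LIMSEQ_inverse_real_of_nat by (simp add: inverse_eq_divide add.commute)
  have lim: "(\<lambda>n. m + 1 / (real n + 1) + d n * (2 * (Bs + norm c + d n) + d n)) \<longlonglongrightarrow>
      m + 0 + 0 * (2 * (Bs + norm c + 0) + 0)"
    by (intro tendsto_intros d0 inv0)
  have lim': "(\<lambda>n. m + 1 / (real n + 1) + d n * (2 * (Bs + norm c + d n) + d n)) \<longlonglongrightarrow> m"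
    using lim by simp
  have ev: "\<forall>\<^sub>F n in sequentially. G s c \<le> m + 1 / (real n + 1) + d n * (2 * (Bs + norm c + d n) + d n)"
  proof (intro always_eventually allI)
    fix n
    show "G s c \<le> m + 1 / (real n + 1) + d n * (2 * (Bs + norm c + d n) + d n)"
      using G_cont[of s Bs, OF Bs, of c "xs n"] xs[of n] unfolding d_def by linarith
  qed
  have "G s c \<le> m"
    by (rule tendsto_le[OF _ lim' tendsto_const ev]) simp
  then show ?thesis using mle by (metis order_trans)
qed

lemma center_fix:
  fixes T :: "'a::{real_inner,complete_space} \<Rightarrow> 'a" and s :: "nat \<Rightarrow> 'a"
  assumes ne: "nonexpansive T" and Bs: "\<And>j. norm (s j) \<le> Bs"
    and reg: "(\<lambda>j. norm (s j - T (s j))) \<longlonglongrightarrow> 0"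
    and cmin: "\<And>x. G s c \<le> G s x"
  shows "T c = c"
proof -
  define a where "a j = norm (s j - T (s j))" for j
  have a0: "a \<longlonglongrightarrow> 0" using reg unfolding a_def .
  have v0': "(\<lambda>j. a j * (2 * (Bs + norm c) + a j)) \<longlonglongrightarrow> 0 * (2 * (Bs + norm c) + 0)"
    by (intro tendsto_intros a0)
  have v0: "(\<lambda>j. a j * (2 * (Bs + norm c) + a j)) \<longlonglongrightarrow> 0" using v0' by simp
  have "G s (T c) \<le> G s c + 0"
  proof (rule G_mono_gen[of s Bs, OF Bs v0])
    fix j
    have 1: "norm (s j - T c) \<le> norm (s j - c) + a j"
    proof -
      have "norm (s j - T c) \<le> norm (s j - T (s j)) + norm (T (s j) - T c)"
        using norm_triangle_ineq[of "s j - T (s j)" "T (s j) - T c"] by simp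
      moreover have "norm (T (s j) - T c) \<le> norm (s j - c)"
        using ne unfolding nonexpansive_def by blast
      ultimately show ?thesis unfolding a_def by simp
    qed
    have 2: "norm (s j - c) \<le> Bs + norm c"
      using norm_triangle_ineq4[of "s j" c] Bs[of j] by simp
    have a_nn: "0 \<le> a j" unfolding a_def by simp
    have "(norm (s j - T c))\<^sup>2 \<le> (norm (s j - c))\<^sup>2 + a j * (2 * norm (s j - c) + a j)"
      by (rule sq_pert[OF 1 a_nn])
    also have "\<dots> \<le> (norm (s j - c))\<^sup>2 + a j * (2 * (Bs + norm c) + a j)"
      using 2 a_nn by (intro add_left_mono mult_left_mono) auto
    finally show "(norm (s j - T c))\<^sup>2 \<le> (norm (s j - c))\<^sup>2 + 0 + a j * (2 * (Bs + norm c) + a j)"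
      by simp
  qed
  then have GT: "G s (T c) \<le> G s c" by simp
  have "G s c \<le> G s ((1/2) *\<^sub>R (c + T c))" by (rule cmin)
  also have "\<dots> \<le> G s c / 2 + G s (T c) / 2 - (norm (c - T c))\<^sup>2/4" by (rule G_mid[of s Bs, OF Bs])
  finally have "(norm (c - T c))\<^sup>2 \<le> 0" using GT by linarith
  then show ?thesis by simp
qed

lemma norm_shift_sq:
  fixes a y :: "'a::real_inner"
  shows "(norm (a - t *\<^sub>R y))\<^sup>2 = (norm a)\<^sup>2 - 2 * t * (a \<bullet> y) + t\<^sup>2 * (norm y)\<^sup>2"
  unfolding power2_norm_eq_inner
  by (simp add: inner_diff_left inner_diff_right inner_commute algebra_simps power2_eq_square)

lemma weak_lemma:
  fixes T :: "'a::{real_inner,complete_space} \<Rightarrow> 'a" and s :: "nat \<Rightarrow> 'a"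
  assumes ne: "nonexpansive T" and Bs: "\<And>j. norm (s j) \<le> Bs"
    and reg: "(\<lambda>j. norm (s j - T (s j))) \<longlonglongrightarrow> 0"
    and conv: "\<And>x. x \<in> Fix T \<Longrightarrow> convergent (\<lambda>k. norm (s k - x))"
  shows "\<exists>p\<in>Fix T. weakly_converges_to s p"
proof -
  obtain c where cmin: "\<And>x. G s c \<le> G s x" using center_exists[of s Bs, OF Bs] by blast
  have cF: "c \<in> Fix T" using center_fix[OF ne Bs reg cmin] unfolding Fix_def by simp
  have "weakly_converges_to s c"
    unfolding weakly_converges_to_def
  proof
    fix y
    show "(\<lambda>k. s k \<bullet> y) \<longlonglongrightarrow> c \<bullet> y"
    proof (rule ccontr)
      assume nc: "\<not> (\<lambda>k. s k \<bullet> y) \<longlonglongrightarrow> c \<bullet> y"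
      have "\<not> (\<forall>e>0. \<exists>N. \<forall>n\<ge>N. dist (s n \<bullet> y) (c \<bullet> y) < e)"
        using nc unfolding lim_sequentially .
      then obtain \<epsilon> where \<epsilon>: "\<epsilon> > 0" and fr0: "\<forall>N. \<exists>n\<ge>N. \<not> dist (s n \<bullet> y) (c \<bullet> y) < \<epsilon>"
        by blast
      have fr: "\<forall>N. \<exists>n\<ge>N. \<epsilon> \<le> \<bar>s n \<bullet> y - c \<bullet> y\<bar>"
        using fr0 by (simp add: dist_real_def not_less)
      define S where "S = {n. \<epsilon> \<le> \<bar>s n \<bullet> y - c \<bullet> y\<bar>}"
      have "infinite S" unfolding infinite_nat_iff_unbounded
      proof
        fix m
        obtain n where "n \<ge> Suc m" "\<epsilon> \<le> \<bar>s n \<bullet> y - c \<bullet> y\<bar>" using fr by blast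
        then show "\<exists>n>m. n \<in> S" unfolding S_def using Suc_le_lessD by blast
      qed
      then have "\<exists>r::nat\<Rightarrow>nat. strict_mono r \<and> (\<forall>n. r n \<in> S)" by (rule infinite_enumerate)
      then obtain r :: "nat \<Rightarrow> nat" where r: "strict_mono r" "\<forall>n. r n \<in> S" by blast
      have "\<exists>f. strict_mono f \<and> monoseq (\<lambda>n. s (r (f n)) \<bullet> y)" by (rule seq_monosub)
      then obtain r' where r': "strict_mono r'" "monoseq (\<lambda>n. s (r (r' n)) \<bullet> y)"
        by (elim exE conjE)
      have "Bseq (\<lambda>n. s (r (r' n)) \<bullet> y)"
      proof (rule BseqI')
        fix n
        have "norm (s (r (r' n)) \<bullet> y) \<le> norm (s (r (r' n))) * norm y"
          using Cauchy_Schwarz_ineq2 by simp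
        also have "\<dots> \<le> Bs * norm y" using Bs by (intro mult_right_mono) auto
        finally show "norm (s (r (r' n)) \<bullet> y) \<le> Bs * norm y" .
      qed
      then obtain \<beta> where \<beta>: "(\<lambda>n. s (r (r' n)) \<bullet> y) \<longlonglongrightarrow> \<beta>"
        using Bseq_monoseq_convergent r'(2) convergent_def by blast
      define u where "u n = s (r (r' n))" for n
      have h: "strict_mono (r \<circ> r')" using r r' strict_mono_o by blast
      have uBs: "\<And>j. norm (u j) \<le> Bs" unfolding u_def using Bs by simp
      have ureg: "(\<lambda>j. norm (u j - T (u j))) \<longlonglongrightarrow> 0"
        using LIMSEQ_subseq_LIMSEQ[OF reg h] unfolding u_def by (simp add: o_def)
      have ulim: "(\<lambda>j. norm (u j - x)) \<longlonglongrightarrow> lim (\<lambda>k. norm (s k - x))"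
        "(\<lambda>j. norm (s j - x)) \<longlonglongrightarrow> lim (\<lambda>k. norm (s k - x))"
        if "x \<in> Fix T" for x
      proof -
        show 1: "(\<lambda>j. norm (s j - x)) \<longlonglongrightarrow> lim (\<lambda>k. norm (s k - x))"
          using conv[OF that] convergent_LIMSEQ_iff by blast
        show "(\<lambda>j. norm (u j - x)) \<longlonglongrightarrow> lim (\<lambda>k. norm (s k - x))"
          using LIMSEQ_subseq_LIMSEQ[OF 1 h] unfolding u_def by (simp add: o_def)
      qed
      have Geq: "G u x = G s x" if "x \<in> Fix T" for x
      proof -
        have "G u x = (lim (\<lambda>k. norm (s k - x)))\<^sup>2"
          unfolding G_def by (rule lsup_lim) (intro tendsto_intros ulim(1)[OF that])
        moreover have "G s x = (lim (\<lambda>k. norm (s k - x)))\<^sup>2"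
          unfolding G_def by (rule lsup_lim) (intro tendsto_intros ulim(2)[OF that])
        ultimately show ?thesis by simp
      qed
      obtain cu where cumin: "\<And>x. G u cu \<le> G u x" using center_exists[of u Bs, OF uBs] by blast
      have cuF: "cu \<in> Fix T" using center_fix[OF ne uBs ureg cumin] unfolding Fix_def by simp
      define \<beta>' where "\<beta>' = \<beta> - c \<bullet> y"
      define Y where "Y = (norm y)\<^sup>2"
      define t where "t = \<beta>' / (Y + 1)"
      define L where "L = lim (\<lambda>k. norm (s k - c))"
      have Y0: "0 \<le> Y" unfolding Y_def by simp
      have "G u c \<le> G u (c + t *\<^sub>R y)"
      proof -
        have "G u c = G s c" by (rule Geq[OF cF])
        also have "\<dots> \<le> G s cu" by (rule cmin)
        also have "\<dots> = G u cu" by (rule Geq[OF cuF, symmetric])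
        also have "\<dots> \<le> G u (c + t *\<^sub>R y)" by (rule cumin)
        finally show ?thesis .
      qed
      moreover have "G u c = L\<^sup>2"
        unfolding G_def L_def by (rule lsup_lim) (intro tendsto_intros ulim(1)[OF cF])
      moreover have "G u (c + t *\<^sub>R y) = L\<^sup>2 - 2 * t * \<beta>' + t\<^sup>2 * Y"
      proof -
        have e: "(norm (u j - (c + t *\<^sub>R y)))\<^sup>2
            = (norm (u j - c))\<^sup>2 - 2 * t * (u j \<bullet> y - c \<bullet> y) + t\<^sup>2 * Y" for j
          using norm_shift_sq[of "u j - c" t y] unfolding Y_def
          by (simp add: inner_diff_left algebra_simps)
        have "(\<lambda>j. (norm (u j - c))\<^sup>2 - 2 * t * (u j \<bullet> y - c \<bullet> y) + t\<^sup>2 * Y)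
            \<longlonglongrightarrow> L\<^sup>2 - 2 * t * (\<beta> - c \<bullet> y) + t\<^sup>2 * Y"
          unfolding L_def
          by (intro tendsto_intros ulim(1)[OF cF]) (use \<beta> in \<open>simp add: u_def\<close>)
        then show ?thesis unfolding G_def e \<beta>'_def by (rule lsup_lim)
      qed
      ultimately have ineq: "0 \<le> t\<^sup>2 * Y - 2 * t * \<beta>'" by linarith
      have "\<epsilon> \<le> \<bar>\<beta>'\<bar>"
      proof -
        have "(\<lambda>n. \<bar>s (r (r' n)) \<bullet> y - c \<bullet> y\<bar>) \<longlonglongrightarrow> \<bar>\<beta> - c \<bullet> y\<bar>"
          by (intro tendsto_intros \<beta>)
        moreover have "\<forall>n. \<epsilon> \<le> \<bar>s (r (r' n)) \<bullet> y - c \<bullet> y\<bar>" using r(2) unfolding S_def by blast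
        ultimately show ?thesis unfolding \<beta>'_def by (intro LIMSEQ_le_const) auto
      qed
      then have b2: "\<beta>'\<^sup>2 > 0" using \<epsilon> by simp
      define q where "q = Y + 1"
      have q: "q > 0" unfolding q_def using Y0 by simp
      have qt: "q * t = \<beta>'" unfolding t_def using q by (simp add: q_def)
      have "q\<^sup>2 * (t\<^sup>2 * Y - 2 * t * \<beta>') = (q*t)\<^sup>2 * Y - 2 * (q*t) * \<beta>' * q"
        by (simp add: power2_eq_square algebra_simps)
      also have "\<dots> = \<beta>'\<^sup>2 * (Y - 2 * q)" unfolding qt by (simp add: power2_eq_square algebra_simps)
      also have "\<dots> < 0" using b2 q Y0 unfolding q_def by (intro mult_pos_neg) auto
      finally have "q\<^sup>2 * (t\<^sup>2 * Y - 2 * t * \<beta>') < 0" .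
      moreover have "0 \<le> q\<^sup>2 * (t\<^sup>2 * Y - 2 * t * \<beta>')" using ineq by simp
      ultimately show False by simp
    qed
  qed
  then show ?thesis using cF by blast
qed

lemma conv_id:
  fixes u v :: "'a::real_inner"
  shows "(norm ((1-l) *\<^sub>R u + l *\<^sub>R v))\<^sup>2 = (1-l)*(norm u)\<^sup>2 + l*(norm v)\<^sup>2 - l*(1-l)*(norm (u-v))\<^sup>2"
  unfolding power2_norm_eq_inner
  by (simp add: inner_diff_left inner_diff_right inner_add_left inner_add_right inner_commute
      algebra_simps power2_eq_square)

lemma inertial_id:
  fixes u v :: "'a::real_inner"
  shows "(norm ((1+a) *\<^sub>R u - a *\<^sub>R v))\<^sup>2 = (1+a)*(norm u)\<^sup>2 - a*(norm v)\<^sup>2 + a*(1+a)*(norm(u-v))\<^sup>2"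
  unfolding power2_norm_eq_inner
  by (simp add: inner_diff_left inner_diff_right inner_add_left inner_add_right inner_commute
      algebra_simps power2_eq_square)

lemma young_lb:
  fixes p q :: "'a::real_inner"
  assumes w: "w > 0" and a: "a \<ge> 0"
  shows "(1 - a/w)*(norm p)\<^sup>2 + (a\<^sup>2 - a*w)*(norm q)\<^sup>2 \<le> (norm (p - a *\<^sub>R q))\<^sup>2"
proof -
  have e1: "(norm (p - a *\<^sub>R q))\<^sup>2 = (norm p)\<^sup>2 - 2*a*(p \<bullet> q) + a\<^sup>2*(norm q)\<^sup>2"
    unfolding power2_norm_eq_inner
    by (simp add: inner_diff_left inner_diff_right inner_commute algebra_simps power2_eq_square)
  have e2: "(norm (p - w *\<^sub>R q))\<^sup>2 = (norm p)\<^sup>2 - 2*w*(p \<bullet> q) + w\<^sup>2*(norm q)\<^sup>2"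
    unfolding power2_norm_eq_inner
    by (simp add: inner_diff_left inner_diff_right inner_commute algebra_simps power2_eq_square)
  have "2*w*(p \<bullet> q) \<le> (norm p)\<^sup>2 + w\<^sup>2*(norm q)\<^sup>2" using e2 by (smt (verit) zero_le_power2)
  then have "2*(p \<bullet> q) \<le> (norm p)\<^sup>2 / w + w*(norm q)\<^sup>2"
    using w by (simp add: field_simps power2_eq_square)
  then have "a * (2*(p \<bullet> q)) \<le> a * ((norm p)\<^sup>2 / w + w*(norm q)\<^sup>2)"
    using a by (rule mult_left_mono)
  then show ?thesis unfolding e1 by (simp add: algebra_simps)
qed

lemma km_basic:
  fixes T :: "'a::real_inner \<Rightarrow> 'a"
  assumes ne: "nonexpansive T" and fx: "T x = x" and l: "0 < l" "l \<le> 1"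
  shows "(norm (m + l *\<^sub>R (T m - m) - x))\<^sup>2 \<le> (norm (m - x))\<^sup>2 - ((1-l)/l) * (norm (l *\<^sub>R (T m - m)))\<^sup>2"
proof -
  let ?u = "m - x" and ?v = "T m - x"
  have eq: "m + l *\<^sub>R (T m - m) - x = (1-l) *\<^sub>R ?u + l *\<^sub>R ?v" by (simp add: algebra_simps)
  have nv: "norm ?v \<le> norm ?u" using ne fx unfolding nonexpansive_def by metis
  then have nv2: "(norm ?v)\<^sup>2 \<le> (norm ?u)\<^sup>2" by (intro power_mono) auto
  have uv: "?u - ?v = -(T m - m)" by simp
  have "(norm (m + l *\<^sub>R (T m - m) - x))\<^sup>2 = (1-l)*(norm ?u)\<^sup>2 + l*(norm ?v)\<^sup>2 - l*(1-l)*(norm (T m - m))\<^sup>2"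
    unfolding eq conv_id uv norm_minus_cancel ..
  also have "\<dots> \<le> (1-l)*(norm ?u)\<^sup>2 + l*(norm ?u)\<^sup>2 - l*(1-l)*(norm (T m - m))\<^sup>2"
    using nv2 l by (simp add: mult_left_mono)
  also have "l*(1-l)*(norm (T m - m))\<^sup>2 = ((1-l)/l) * (norm (l *\<^sub>R (T m - m)))\<^sup>2"
  proof -
    have "norm (l *\<^sub>R (T m - m)) = l * norm (T m - m)" using l by simp
    then show ?thesis using l by (simp add: power2_eq_square field_simps)
  qed
  finally show ?thesis by (simp add: algebra_simps)
qed

lemma step:
  fixes T :: "'a::real_inner \<Rightarrow> 'a"
  assumes ne: "nonexpansive T" and fx: "T x = x"
    and m: "m = z0 + a *\<^sub>R (z0 - zm)" and z1: "z1 = m + l *\<^sub>R (T m + e - m)"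
    and a: "0 \<le> a" and l: "0 < l" "l \<le> 1" and dl: "\<delta> > 0"
  shows "(norm (z1 - x))\<^sup>2 \<le> (1+a)*(norm(z0-x))\<^sup>2 - a*(norm(zm-x))\<^sup>2
     + (a*(1+a) + a*\<delta>*(1-l))*(norm(z0-zm))\<^sup>2 - ((1-l)*\<delta>/(a+\<delta>*l))*(norm(z1 - z0))\<^sup>2
     + norm e * (2*(norm (z1 - x) + norm e) + norm e)
     + ((1-l)/l) * (norm e * (2*(norm (z1 - m) + norm e) + norm e))"
proof -
  define zh where "zh = m + l *\<^sub>R (T m - m)"
  have z1h: "z1 = zh + l *\<^sub>R e" unfolding z1 zh_def by (simp add: algebra_simps)
  have nle: "norm (l *\<^sub>R e) \<le> norm e" using l by (simp add: mult_left_le_one_le)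
  have A: "(norm (z1 - x))\<^sup>2 \<le> (norm (zh - x))\<^sup>2 + norm e * (2*(norm (z1 - x) + norm e) + norm e)"
  proof -
    have 1: "norm (z1 - x) \<le> norm (zh - x) + norm e"
      using norm_triangle_ineq[of "zh - x" "l *\<^sub>R e"] nle unfolding z1h by (simp add: algebra_simps)
    have 2: "norm (zh - x) \<le> norm (z1 - x) + norm e"
      using norm_triangle_ineq4[of "z1 - x" "l *\<^sub>R e"] nle unfolding z1h by (simp add: algebra_simps)
    have "(norm (z1 - x))\<^sup>2 \<le> (norm (zh - x))\<^sup>2 + norm e * (2 * norm (zh - x) + norm e)"
      by (rule sq_pert[OF 1]) simp
    also have "\<dots> \<le> (norm (zh - x))\<^sup>2 + norm e * (2*(norm (z1 - x) + norm e) + norm e)"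
      using 2 by (intro add_left_mono mult_left_mono) auto
    finally show ?thesis .
  qed
  have B: "(norm (zh - x))\<^sup>2 \<le> (norm (m - x))\<^sup>2 - ((1-l)/l) * (norm (zh - m))\<^sup>2"
    using km_basic[OF ne fx l, of m] unfolding zh_def by simp
  have C: "(norm (z1 - m))\<^sup>2 \<le> (norm (zh - m))\<^sup>2 + norm e * (2*(norm (z1 - m) + norm e) + norm e)"
  proof -
    have 1: "norm (z1 - m) \<le> norm (zh - m) + norm e"
      using norm_triangle_ineq[of "zh - m" "l *\<^sub>R e"] nle unfolding z1h by (simp add: algebra_simps)
    have 2: "norm (zh - m) \<le> norm (z1 - m) + norm e"
      using norm_triangle_ineq4[of "z1 - m" "l *\<^sub>R e"] nle unfolding z1h by (simp add: algebra_simps)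
    have "(norm (z1 - m))\<^sup>2 \<le> (norm (zh - m))\<^sup>2 + norm e * (2 * norm (zh - m) + norm e)"
      by (rule sq_pert[OF 1]) simp
    also have "\<dots> \<le> (norm (zh - m))\<^sup>2 + norm e * (2*(norm (z1 - m) + norm e) + norm e)"
      using 2 by (intro add_left_mono mult_left_mono) auto
    finally show ?thesis .
  qed
  have D: "(norm (m - x))\<^sup>2 = (1+a)*(norm(z0-x))\<^sup>2 - a*(norm(zm-x))\<^sup>2 + a*(1+a)*(norm(z0-zm))\<^sup>2"
  proof -
    have "m - x = (1+a) *\<^sub>R (z0 - x) - a *\<^sub>R (zm - x)" unfolding m by (simp add: algebra_simps)
    moreover have "(z0 - x) - (zm - x) = z0 - zm" by simp
    ultimately show ?thesis using inertial_id[of a "z0 - x" "zm - x"] by simp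
  qed
  define w where "w = a + \<delta> * l"
  have w: "w > 0" unfolding w_def using a l dl by (simp add: add_nonneg_pos)
  have E: "(\<delta>*l/w)*(norm (z1 - z0))\<^sup>2 - a*\<delta>*l*(norm(z0-zm))\<^sup>2 \<le> (norm (z1 - m))\<^sup>2"
  proof -
    have zz: "(z1 - z0) - a *\<^sub>R (z0 - zm) = z1 - m" unfolding m by (simp add: algebra_simps)
    have "(1 - a/w)*(norm (z1 - z0))\<^sup>2 + (a\<^sup>2 - a*w)*(norm (z0 - zm))\<^sup>2 \<le> (norm (z1 - m))\<^sup>2"
      using young_lb[OF w a, of "z1 - z0" "z0 - zm"] unfolding zz .
    moreover have "1 - a/w = \<delta>*l/w" using w unfolding w_def by (simp add: field_simps)
    moreover have "a\<^sup>2 - a*w = - (a*\<delta>*l)" unfolding w_def by (simp add: power2_eq_square algebra_simps)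
    ultimately show ?thesis by simp
  qed
  define t where "t = (1-l)/l"
  have t0: "t \<ge> 0" unfolding t_def using l by simp
  have E': "t * ((\<delta>*l/w)*(norm (z1 - z0))\<^sup>2 - a*\<delta>*l*(norm(z0-zm))\<^sup>2) \<le> t * (norm (z1 - m))\<^sup>2"
    using E t0 by (rule mult_left_mono)
  have C': "t * (norm (z1 - m))\<^sup>2 \<le> t * (norm (zh - m))\<^sup>2 + t * (norm e * (2*(norm (z1 - m) + norm e) + norm e))"
    using mult_left_mono[OF C t0] by (simp add: algebra_simps)
  have k1: "t * (\<delta>*l/w) = (1-l)*\<delta>/(a+\<delta>*l)"
  proof -
    have "t * (\<delta>*l/w) = (1-l)*\<delta>/w" unfolding t_def using l w by (simp add: field_simps)
    then show ?thesis unfolding w_def .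
  qed
  have k2: "t * (a*\<delta>*l) = a*\<delta>*(1-l)"
  proof -
    have "(1-l)/l*l = 1-l" using l by simp
    then show ?thesis unfolding t_def by (metis mult.commute mult.left_commute)
  qed
  have E'': "t * ((\<delta>*l/w)*(norm (z1 - z0))\<^sup>2 - a*\<delta>*l*(norm(z0-zm))\<^sup>2)
     = ((1-l)*\<delta>/(a+\<delta>*l))*(norm (z1 - z0))\<^sup>2 - a*\<delta>*(1-l)*(norm(z0-zm))\<^sup>2"
  proof -
    have "t * ((\<delta>*l/w)*(norm (z1 - z0))\<^sup>2 - a*\<delta>*l*(norm(z0-zm))\<^sup>2)
       = (t * (\<delta>*l/w))*(norm (z1 - z0))\<^sup>2 - (t * (a*\<delta>*l))*(norm(z0-zm))\<^sup>2"
      by (simp only: right_diff_distrib mult.assoc)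
    then show ?thesis unfolding k1 k2 .
  qed
  have F: "(a*(1+a) + a*\<delta>*(1-l))*(norm(z0-zm))\<^sup>2 = a*(1+a)*(norm(z0-zm))\<^sup>2 + a*\<delta>*(1-l)*(norm(z0-zm))\<^sup>2"
    by (simp add: algebra_simps)
  show ?thesis using A B C' D E' E'' F unfolding t_def[symmetric] by linarith
qed

lemma qf:
  fixes M c \<epsilon> :: "nat \<Rightarrow> real"
  assumes step: "\<And>k. M (Suc k) \<le> M k - c k + \<epsilon> k" and c0: "\<And>k. 0 \<le> c k"
    and e0: "\<And>k. 0 \<le> \<epsilon> k" and es: "summable \<epsilon>" and lb: "\<And>k. m \<le> M k"
  shows "summable c \<and> convergent M"
proof -
  have part: "(\<Sum>k<n. c k) \<le> M 0 - M n + (\<Sum>k<n. \<epsilon> k)" for n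
  proof (induction n)
    case 0
    then show ?case by simp
  next
    case (Suc n)
    then show ?case unfolding sum.lessThan_Suc using step[of n] by linarith
  qed
  have sle: "(\<Sum>k<n. \<epsilon> k) \<le> suminf \<epsilon>" for n
    by (rule sum_le_suminf[OF es]) (auto intro: e0)
  have sc: "summable c"
  proof (rule summableI_nonneg_bounded[where x="M 0 - m + suminf \<epsilon>"])
    show "0 \<le> c n" for n by (rule c0)
    show "(\<Sum>i<n. c i) \<le> M 0 - m + suminf \<epsilon>" for n
      using part[of n] sle[of n] lb[of n] by linarith
  qed
  define N where "N n = M n - (\<Sum>k<n. \<epsilon> k)" for n
  have "decseq N" unfolding decseq_Suc_iff
  proof
    fix n
    show "N (Suc n) \<le> N n" unfolding N_def sum.lessThan_Suc using step[of n] c0[of n] by linarith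
  qed
  moreover have "\<forall>i. m - suminf \<epsilon> \<le> N i"
  proof
    fix i show "m - suminf \<epsilon> \<le> N i" unfolding N_def using lb[of i] sle[of i] by linarith
  qed
  ultimately obtain L where L: "N \<longlonglongrightarrow> L" using decseq_convergent by blast
  have "(\<lambda>n. N n + (\<Sum>k<n. \<epsilon> k)) \<longlonglongrightarrow> L + suminf \<epsilon>"
    by (intro tendsto_add L summable_LIMSEQ es)
  then have "M \<longlonglongrightarrow> L + suminf \<epsilon>" unfolding N_def by simp
  then show ?thesis using sc convergent_def by blast
qed

theorem theorem2:
  fixes T :: "'a::{real_inner, complete_space} \<Rightarrow> 'a"
    and z :: "nat \<Rightarrow> 'a" and z_minus1 :: 'a
    and mu e :: "nat \<Rightarrow> 'a"
    and alpha_k lambda_k :: "nat \<Rightarrow> real"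
    and alpha lambda sigma delta :: real
  assumes T_ne: "nonexpansive T"
    and Fix_ne: "Fix T \<noteq> {}"
    and mu_def: "\<And>k. mu k = z k + alpha_k k *\<^sub>R (z k - (if k = 0 then z_minus1 else z (k - 1)))"
    and z_rec: "\<And>k. z (Suc k) = mu k + lambda_k k *\<^sub>R (T (mu k) + e k - mu k)"
    and alpha_mono: "mono alpha_k"
    and lambda_mono: "mono lambda_k"
    and a1: "0 \<le> alpha" and a2: "alpha < 1"
    and a3: "\<And>k. 0 \<le> alpha_k k \<and> alpha_k k \<le> alpha"
    and a4: "alpha_k 0 = 0"
    and b1: "lambda > 0" "sigma > 0" "delta > 0"
    and b2: "delta > alpha * (alpha * (1 + alpha) + sigma) / (1 - alpha\<^sup>2)"
    and b3: "\<And>k. lambda \<le> lambda_k k \<and>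
       lambda_k k \<le> (delta - alpha * (alpha * (1 + alpha) + alpha * delta + sigma))
                     / (delta * (1 + alpha * (1 + alpha) + alpha * delta + sigma))"
    and c: "bounded (range z)"
    and d: "summable (\<lambda>k. norm (e k))"
  shows "summable (\<lambda>k. (norm (z (Suc k) - z k))\<^sup>2)
    \<and> (\<lambda>k. norm (z (Suc k) - z k)) \<longlonglongrightarrow> 0
    \<and> (\<forall>zs \<in> Fix T. convergent (\<lambda>k. norm (z k - zs)))
    \<and> (\<lambda>k. norm (T (mu k) - mu k)) \<longlonglongrightarrow> 0
    \<and> (\<exists>p \<in> Fix T. weakly_converges_to z p)"
proof -
  define zp where "zp k = (if k = 0 then z_minus1 else z (k - 1))" for k
  have mu_eq: "mu k = z k + alpha_k k *\<^sub>R (z k - zp k)" for k using mu_def[of k] unfolding zp_def .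
  have zp_Suc: "zp (Suc k) = z k" for k unfolding zp_def by simp
  obtain B0 where B0: "\<And>k. norm (z k) \<le> B0" using c unfolding bounded_iff by auto
  define B where "B = max B0 (norm z_minus1)"
  have Bz: "norm (z k) \<le> B" for k using B0[of k] by (auto simp: B_def le_max_iff_disj)
  have Bzp: "norm (zp k) \<le> B" for k
    using Bz[of "k - 1"] by (auto simp: zp_def B_def le_max_iff_disj)
  have B_nn: "0 \<le> B" using Bz[of 0] norm_ge_zero[of "z 0"] by linarith
  have e_lim: "(\<lambda>k. norm (e k)) \<longlonglongrightarrow> 0" by (rule summable_LIMSEQ_zero[OF d])
  have "Bseq (\<lambda>k. norm (e k))" using e_lim convergent_imp_Bseq convergentI by blast
  then obtain Be where Be: "\<And>k. norm (e k) \<le> Be" by (metis BseqE real_norm_def abs_norm_cancel)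
  have Be_nn: "0 \<le> Be" using Be[of 0] norm_ge_zero[of "e 0"] by linarith
  have ak0: "0 \<le> alpha_k k" and ak1: "alpha_k k \<le> alpha" for k using a3[of k] by auto
  define G0 where "G0 = alpha * (1 + alpha) + alpha * delta + sigma"
  define Q where "Q = delta - alpha * G0"
  define R where "R = delta * (1 + G0)"
  have G0_pos: "0 < G0" unfolding G0_def using a1 b1 by (simp add: add_nonneg_pos)
  have R_pos: "0 < R" unfolding R_def using G0_pos b1 by simp
  have lk: "lambda \<le> lambda_k k" "lambda_k k \<le> Q / R" for k
    using b3[of k] unfolding Q_def R_def G0_def by (auto simp: add.assoc)
  have QR: "Q \<le> R" unfolding Q_def R_def using G0_pos a1 b1
    by (simp add: algebra_simps add_nonneg_nonneg)
  have lk1: "lambda_k k \<le> 1" for k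
  proof -
    have "Q / R \<le> 1" using QR R_pos by simp
    then show ?thesis using lk(2)[of k] by linarith
  qed
  have lkpos: "0 < lambda_k k" for k using lk(1)[of k] b1 by linarith
  define \<gamma> where "\<gamma> = alpha * (1 + alpha) + alpha * delta"
  have G0_eq: "G0 = \<gamma> + sigma" unfolding G0_def \<gamma>_def by simp
  have \<gamma>_nn: "0 \<le> \<gamma>" unfolding \<gamma>_def using a1 b1 by simp
  have coef: "\<gamma> + sigma \<le> (1 - lambda_k k) * delta / (alpha_k k + delta * lambda_k k)" for k
  proof -
    let ?l = "lambda_k k" and ?a = "alpha_k k"
    have w: "0 < ?a + delta * ?l" using ak0[of k] lkpos[of k] b1 by (simp add: add_nonneg_pos)
    have "?l * R \<le> Q" using lk(2)[of k] R_pos by (simp add: pos_le_divide_eq)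
    then have h1: "?l * delta + ?l * delta * G0 \<le> delta - alpha * G0"
      unfolding Q_def R_def by (simp add: algebra_simps)
    have h2: "G0 * ?a \<le> G0 * alpha" using ak1[of k] G0_pos by (simp add: mult_left_mono)
    have e1: "G0 * (?a + delta * ?l) = G0 * ?a + ?l * delta * G0" by (simp add: algebra_simps)
    have e2: "(1 - ?l) * delta = delta - ?l * delta" by (simp add: algebra_simps)
    have "G0 * (?a + delta * ?l) \<le> (1 - ?l) * delta" unfolding e1 e2 using h1 h2 mult.commute[of alpha G0] by linarith
    then show ?thesis using w unfolding G0_eq by (simp add: pos_le_divide_eq)
  qed
  have coef2: "alpha_k k * (1 + alpha_k k) + alpha_k k * delta * (1 - lambda_k k) \<le> \<gamma>" for k
  proof -
    have "alpha_k k * (1 + alpha_k k) \<le> alpha * (1 + alpha)"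
      using ak0[of k] ak1[of k] by (intro mult_mono) auto
    moreover have "alpha_k k * delta * (1 - lambda_k k) \<le> alpha * delta * 1"
      using ak0[of k] ak1[of k] lkpos[of k] lk1[of k] b1 by (intro mult_mono) auto
    ultimately show ?thesis unfolding \<gamma>_def by simp
  qed
  have Bmu: "norm (mu k) \<le> 3 * B" for k
  proof -
    have "norm (z k - zp k) \<le> 2 * B" using norm_triangle_ineq4[of "z k" "zp k"] Bz[of k] Bzp[of k] by simp
    moreover have "alpha_k k \<le> 1" using ak1[of k] a2 by simp
    ultimately have "alpha_k k * norm (z k - zp k) \<le> 1 * (2 * B)"
      using ak0[of k] by (intro mult_mono) auto
    then show ?thesis unfolding mu_eq using norm_triangle_ineq[of "z k" "alpha_k k *\<^sub>R (z k - zp k)"] Bz[of k] ak0[of k]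
      by simp
  qed
  define E where "E x = 2 * (B + norm x + Be) + Be + (1 / lambda) * (2 * (4 * B + Be) + Be)" for x :: 'a
  have E_nn: "0 \<le> E x" for x unfolding E_def using B_nn Be_nn b1 by simp
  have key: "(norm (z (Suc k) - x))\<^sup>2 \<le> (1 + alpha_k k) * (norm (z k - x))\<^sup>2 - alpha_k k * (norm (zp k - x))\<^sup>2
     + \<gamma> * (norm (z k - zp k))\<^sup>2 - (\<gamma> + sigma) * (norm (z (Suc k) - z k))\<^sup>2 + E x * norm (e k)"
    if x: "x \<in> Fix T" for x k
  proof -
    have fx: "T x = x" using x unfolding Fix_def by simp
    let ?l = "lambda_k k" and ?a = "alpha_k k" and ?n = "norm (e k)"
    note S = step[OF T_ne fx mu_eq[of k] z_rec[of k] ak0[of k] lkpos[of k] lk1[of k] b1(3)]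
    have n_nn: "0 \<le> ?n" by simp
    have err1: "?n * (2 * (norm (z (Suc k) - x) + ?n) + ?n) \<le> ?n * (2 * (B + norm x + Be) + Be)"
    proof -
      have "norm (z (Suc k) - x) \<le> B + norm x"
        using norm_triangle_ineq4[of "z (Suc k)" x] Bz[of "Suc k"] by simp
      then show ?thesis using Be[of k] by (intro mult_left_mono) auto
    qed
    have err2: "((1 - ?l) / ?l) * (?n * (2 * (norm (z (Suc k) - mu k) + ?n) + ?n))
        \<le> (1 / lambda) * (?n * (2 * (4 * B + Be) + Be))"
    proof (rule mult_mono)
      have "(1 - ?l) / ?l \<le> 1 / ?l" using lkpos[of k] by (simp add: divide_right_mono)
      also have "\<dots> \<le> 1 / lambda" using lk(1)[of k] b1 by (simp add: frac_le)
      finally show "(1 - ?l) / ?l \<le> 1 / lambda" .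
      have "norm (z (Suc k) - mu k) \<le> 4 * B"
        using norm_triangle_ineq4[of "z (Suc k)" "mu k"] Bz[of "Suc k"] Bmu[of k] by simp
      then show "?n * (2 * (norm (z (Suc k) - mu k) + ?n) + ?n) \<le> ?n * (2 * (4 * B + Be) + Be)"
        using Be[of k] by (intro mult_left_mono) auto
      show "0 \<le> 1 / lambda" using b1 by simp
      show "0 \<le> ?n * (2 * (norm (z (Suc k) - mu k) + ?n) + ?n)" by simp
    qed
    have c1: "(?a * (1 + ?a) + ?a * delta * (1 - ?l)) * (norm (z k - zp k))\<^sup>2 \<le> \<gamma> * (norm (z k - zp k))\<^sup>2"
      using coef2[of k] by (intro mult_right_mono) auto
    have c2: "(\<gamma> + sigma) * (norm (z (Suc k) - z k))\<^sup>2 \<le> ((1 - ?l) * delta / (?a + delta * ?l)) * (norm (z (Suc k) - z k))\<^sup>2"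
      using coef[of k] by (intro mult_right_mono) auto
    have Ee: "E x * ?n = ?n * (2 * (B + norm x + Be) + Be) + (1 / lambda) * (?n * (2 * (4 * B + Be) + Be))"
      unfolding E_def by (simp add: algebra_simps)
    show ?thesis using S err1 err2 c1 c2 Ee by linarith
  qed
  define M where "M x k = (norm (z k - x))\<^sup>2 - alpha_k k * (norm (zp k - x))\<^sup>2 + \<gamma> * (norm (z k - zp k))\<^sup>2" for x k
  have Mstep: "M x (Suc k) \<le> M x k - sigma * (norm (z (Suc k) - z k))\<^sup>2 + E x * norm (e k)"
    if x: "x \<in> Fix T" for x k
  proof -
    have "alpha_k k \<le> alpha_k (Suc k)" using alpha_mono by (simp add: monoD)
    then have "alpha_k k * (norm (z k - x))\<^sup>2 \<le> alpha_k (Suc k) * (norm (z k - x))\<^sup>2"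
      by (intro mult_right_mono) auto
    then show ?thesis unfolding M_def zp_Suc using key[OF x, of k] by (simp add: algebra_simps)
  qed
  have Mlb: "- (alpha * (B + norm x)\<^sup>2) \<le> M x k" for x k
  proof -
    have "norm (zp k - x) \<le> B + norm x" using norm_triangle_ineq4[of "zp k" x] Bzp[of k] by simp
    then have "(norm (zp k - x))\<^sup>2 \<le> (B + norm x)\<^sup>2" by (intro power_mono) auto
    then have "alpha_k k * (norm (zp k - x))\<^sup>2 \<le> alpha * (B + norm x)\<^sup>2"
      using ak0[of k] ak1[of k] a1 by (intro mult_mono) auto
    then show ?thesis unfolding M_def using \<gamma>_nn by (smt (verit) mult_nonneg_nonneg zero_le_power2)
  qed
  have QF: "summable (\<lambda>k. sigma * (norm (z (Suc k) - z k))\<^sup>2) \<and> convergent (M x)"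
    if x: "x \<in> Fix T" for x
  proof (rule qf)
    show "M x (Suc k) \<le> M x k - sigma * (norm (z (Suc k) - z k))\<^sup>2 + E x * norm (e k)" for k
      by (rule Mstep[OF x])
    show "0 \<le> sigma * (norm (z (Suc k) - z k))\<^sup>2" for k using b1 by simp
    show "0 \<le> E x * norm (e k)" for k using E_nn by simp
    show "summable (\<lambda>k. E x * norm (e k))" using d by simp
    show "- (alpha * (B + norm x)\<^sup>2) \<le> M x k" for k by (rule Mlb)
  qed
  obtain x0 where x0: "x0 \<in> Fix T" using Fix_ne by blast
  have S1: "summable (\<lambda>k. (norm (z (Suc k) - z k))\<^sup>2)" using QF[OF x0] b1 by simp
  have D1lim: "(\<lambda>k. norm (z (Suc k) - z k)) \<longlonglongrightarrow> 0"
  proof -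
    have "(\<lambda>k. (norm (z (Suc k) - z k))\<^sup>2) \<longlonglongrightarrow> 0" by (rule summable_LIMSEQ_zero[OF S1])
    then have "(\<lambda>k. sqrt ((norm (z (Suc k) - z k))\<^sup>2)) \<longlonglongrightarrow> sqrt 0" by (rule tendsto_real_sqrt)
    then show ?thesis by simp
  qed
  have D0lim: "(\<lambda>k. norm (z k - zp k)) \<longlonglongrightarrow> 0"
    by (rule LIMSEQ_imp_Suc) (simp add: zp_Suc D1lim)
  have conv: "convergent (\<lambda>k. norm (z k - zs))" if zs: "zs \<in> Fix T" for zs
  proof -
    define \<phi> where "\<phi> k = (norm (z k - zs))\<^sup>2" for k
    define K where "K = (B + norm zs)\<^sup>2"
    have \<phi>K: "\<phi> k \<le> K" and \<phi>0: "0 \<le> \<phi> k" for k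
    proof -
      have "norm (z k - zs) \<le> B + norm zs" using norm_triangle_ineq4[of "z k" zs] Bz[of k] by simp
      then show "\<phi> k \<le> K" unfolding \<phi>_def K_def by (intro power_mono) auto
      show "0 \<le> \<phi> k" unfolding \<phi>_def by simp
    qed
    obtain Lm where Lm: "M zs \<longlonglongrightarrow> Lm" using QF[OF zs] convergent_def by blast
    obtain ab where ab: "alpha_k \<longlonglongrightarrow> ab" "\<forall>i. alpha_k i \<le> ab"
      using incseq_convergent[OF alpha_mono, of alpha] ak1 by blast
    have ab1: "ab \<le> alpha" by (rule LIMSEQ_le_const2[OF ab(1)]) (use ak1 in auto)
    have t1: "(\<lambda>k. \<phi> (Suc k) - alpha_k (Suc k) * \<phi> k) \<longlonglongrightarrow> Lm"
    proof -
      have "(\<lambda>k. M zs (Suc k) - \<gamma> * (norm (z (Suc k) - z k))\<^sup>2) \<longlonglongrightarrow> Lm - \<gamma> * 0\<^sup>2"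
        by (intro tendsto_intros LIMSEQ_Suc[OF Lm] D1lim)
      then show ?thesis unfolding M_def \<phi>_def zp_Suc by simp
    qed
    have t2: "(\<lambda>k. \<phi> (Suc k) - \<phi> k) \<longlonglongrightarrow> 0"
    proof (rule Lim_null_comparison)
      show "\<forall>\<^sub>F k in sequentially. norm (\<phi> (Suc k) - \<phi> k) \<le> norm (z (Suc k) - z k) * (2 * (B + norm zs))"
      proof (intro always_eventually allI)
        fix k
        let ?n1 = "norm (z (Suc k) - zs)" and ?n0 = "norm (z k - zs)"
        have d: "\<bar>?n1 - ?n0\<bar> \<le> norm (z (Suc k) - z k)"
          using norm_triangle_ineq3[of "z (Suc k) - zs" "z k - zs"] by simp
        have s: "?n1 + ?n0 \<le> 2 * (B + norm zs)"
          using norm_triangle_ineq4[of "z (Suc k)" zs] Bz[of "Suc k"] norm_triangle_ineq4[of "z k" zs] Bz[of k]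
          by simp
        have "\<phi> (Suc k) - \<phi> k = (?n1 - ?n0) * (?n1 + ?n0)" unfolding \<phi>_def by (simp add: power2_eq_square algebra_simps)
        then have "norm (\<phi> (Suc k) - \<phi> k) = \<bar>?n1 - ?n0\<bar> * (?n1 + ?n0)" by (simp add: abs_mult)
        also have "\<dots> \<le> norm (z (Suc k) - z k) * (2 * (B + norm zs))"
          using d s by (intro mult_mono) auto
        finally show "norm (\<phi> (Suc k) - \<phi> k) \<le> norm (z (Suc k) - z k) * (2 * (B + norm zs))" .
      qed
      show "(\<lambda>k. norm (z (Suc k) - z k) * (2 * (B + norm zs))) \<longlonglongrightarrow> 0"
        using tendsto_mult_right[OF D1lim, of "2 * (B + norm zs)"] by simp
    qed
    have t3: "(\<lambda>k. (alpha_k (Suc k) - ab) * \<phi> k) \<longlonglongrightarrow> 0"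
    proof (rule Lim_null_comparison)
      show "\<forall>\<^sub>F k in sequentially. norm ((alpha_k (Suc k) - ab) * \<phi> k) \<le> \<bar>alpha_k (Suc k) - ab\<bar> * K"
      proof (intro always_eventually allI)
        fix k
        show "norm ((alpha_k (Suc k) - ab) * \<phi> k) \<le> \<bar>alpha_k (Suc k) - ab\<bar> * K"
          using \<phi>K[of k] \<phi>0[of k] by (simp add: abs_mult mult_left_mono)
      qed
      have "(\<lambda>k. \<bar>alpha_k (Suc k) - ab\<bar> * K) \<longlonglongrightarrow> \<bar>ab - ab\<bar> * K"
        by (intro tendsto_intros LIMSEQ_Suc[OF ab(1)])
      then show "(\<lambda>k. \<bar>alpha_k (Suc k) - ab\<bar> * K) \<longlonglongrightarrow> 0" by simp
    qed
    have "(\<lambda>k. (\<phi> (Suc k) - alpha_k (Suc k) * \<phi> k) - (\<phi> (Suc k) - \<phi> k) + (alpha_k (Suc k) - ab) * \<phi> k)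
        \<longlonglongrightarrow> Lm - 0 + 0"
      by (intro tendsto_intros t1 t2 t3)
    moreover have "(\<lambda>k. (\<phi> (Suc k) - alpha_k (Suc k) * \<phi> k) - (\<phi> (Suc k) - \<phi> k) + (alpha_k (Suc k) - ab) * \<phi> k)
        = (\<lambda>k. (1 - ab) * \<phi> k)"
      by (rule ext) (simp add: algebra_simps)
    ultimately have "(\<lambda>k. (1 - ab) * \<phi> k) \<longlonglongrightarrow> Lm" by simp
    then have "(\<lambda>k. (1 / (1 - ab)) * ((1 - ab) * \<phi> k)) \<longlonglongrightarrow> (1 / (1 - ab)) * Lm"
      by (rule tendsto_mult_left)
    moreover have "1 - ab \<noteq> 0" using ab1 a2 by simp
    ultimately have "\<phi> \<longlonglongrightarrow> Lm / (1 - ab)" by simp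
    then have "(\<lambda>k. sqrt (\<phi> k)) \<longlonglongrightarrow> sqrt (Lm / (1 - ab))" by (rule tendsto_real_sqrt)
    then show ?thesis unfolding \<phi>_def convergent_def by auto
  qed
  have Tlim: "(\<lambda>k. norm (T (mu k) - mu k)) \<longlonglongrightarrow> 0"
  proof (rule Lim_null_comparison)
    show "\<forall>\<^sub>F k in sequentially. norm (norm (T (mu k) - mu k))
        \<le> (1 / lambda) * (norm (z (Suc k) - z k) + alpha * norm (z k - zp k)) + norm (e k)"
    proof (intro always_eventually allI)
      fix k
      let ?l = "lambda_k k"
      have l0: "?l \<noteq> 0" using lkpos[of k] by simp
      have "z (Suc k) - mu k = ?l *\<^sub>R (T (mu k) + e k - mu k)" using z_rec[of k] by simp
      then have "(1 / ?l) *\<^sub>R (z (Suc k) - mu k) = T (mu k) + e k - mu k" using l0 by simp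
      then have eq: "T (mu k) - mu k = (1 / ?l) *\<^sub>R (z (Suc k) - mu k) - e k" by (simp add: algebra_simps)
      have nz: "norm (z (Suc k) - mu k) \<le> norm (z (Suc k) - z k) + alpha * norm (z k - zp k)"
      proof -
        have e: "z (Suc k) - mu k = (z (Suc k) - z k) - alpha_k k *\<^sub>R (z k - zp k)" unfolding mu_eq by (simp add: algebra_simps)
        have "norm ((z (Suc k) - z k) - alpha_k k *\<^sub>R (z k - zp k)) \<le> norm (z (Suc k) - z k) + alpha_k k * norm (z k - zp k)"
          using norm_triangle_ineq4[of "z (Suc k) - z k" "alpha_k k *\<^sub>R (z k - zp k)"] ak0[of k] by simp
        then have "norm (z (Suc k) - mu k) \<le> norm (z (Suc k) - z k) + alpha_k k * norm (z k - zp k)"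
          unfolding e .
        moreover have "alpha_k k * norm (z k - zp k) \<le> alpha * norm (z k - zp k)"
          using ak1[of k] by (intro mult_right_mono) auto
        ultimately show ?thesis by linarith
      qed
      have "norm (T (mu k) - mu k) \<le> norm ((1 / ?l) *\<^sub>R (z (Suc k) - mu k)) + norm (e k)"
        unfolding eq by (rule norm_triangle_ineq4)
      also have "norm ((1 / ?l) *\<^sub>R (z (Suc k) - mu k)) = (1 / ?l) * norm (z (Suc k) - mu k)"
        using lkpos[of k] by simp
      also have "(1 / ?l) * norm (z (Suc k) - mu k) \<le> (1 / lambda) * (norm (z (Suc k) - z k) + alpha * norm (z k - zp k))"
      proof (rule mult_mono)
        show "1 / ?l \<le> 1 / lambda" using lk(1)[of k] b1 by (simp add: frac_le)
      qed (use nz b1 in auto)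
      finally show "norm (norm (T (mu k) - mu k)) \<le> (1 / lambda) * (norm (z (Suc k) - z k) + alpha * norm (z k - zp k)) + norm (e k)"
        by simp
    qed
    have "(\<lambda>k. (1 / lambda) * (norm (z (Suc k) - z k) + alpha * norm (z k - zp k)) + norm (e k))
        \<longlonglongrightarrow> (1 / lambda) * (0 + alpha * 0) + 0"
      by (intro tendsto_intros D1lim D0lim e_lim)
    then show "(\<lambda>k. (1 / lambda) * (norm (z (Suc k) - z k) + alpha * norm (z k - zp k)) + norm (e k)) \<longlonglongrightarrow> 0"
      by simp
  qed
  have reg: "(\<lambda>k. norm (z k - T (z k))) \<longlonglongrightarrow> 0"
  proof (rule Lim_null_comparison)
    show "\<forall>\<^sub>F k in sequentially. norm (norm (z k - T (z k))) \<le> 2 * (alpha * norm (z k - zp k)) + norm (T (mu k) - mu k)"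
    proof (intro always_eventually allI)
      fix k
      have zm: "norm (z k - mu k) \<le> alpha * norm (z k - zp k)"
      proof -
        have "norm (z k - mu k) = alpha_k k * norm (z k - zp k)" unfolding mu_eq using ak0[of k] by simp
        also have "\<dots> \<le> alpha * norm (z k - zp k)" using ak1[of k] by (intro mult_right_mono) auto
        finally show ?thesis .
      qed
      have tt: "norm (T (mu k) - T (z k)) \<le> norm (z k - mu k)"
        using T_ne unfolding nonexpansive_def by (metis norm_minus_commute)
      have "z k - T (z k) = (z k - mu k) + (mu k - T (mu k)) + (T (mu k) - T (z k))" by simp
      then have "norm (z k - T (z k)) \<le> norm (z k - mu k) + norm (mu k - T (mu k)) + norm (T (mu k) - T (z k))"
        by (metis norm_triangle_le order_refl add_mono)
      then show "norm (norm (z k - T (z k))) \<le> 2 * (alpha * norm (z k - zp k)) + norm (T (mu k) - mu k)"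
        using zm tt by (simp add: norm_minus_commute)
    qed
    have "(\<lambda>k. 2 * (alpha * norm (z k - zp k)) + norm (T (mu k) - mu k)) \<longlonglongrightarrow> 2 * (alpha * 0) + 0"
      by (intro tendsto_intros D0lim Tlim)
    then show "(\<lambda>k. 2 * (alpha * norm (z k - zp k)) + norm (T (mu k) - mu k)) \<longlonglongrightarrow> 0" by simp
  qed
  have W: "\<exists>p\<in>Fix T. weakly_converges_to z p"
    by (rule weak_lemma[OF T_ne Bz reg conv])
  show ?thesis using S1 D1lim conv Tlim W by blast
qed

end
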